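(* Let $\mathbf C$ be a category of coframes and $(L,\lim_L)$ a convergence $\mathbf C$-object. Then $\lim_{T(L)}$, defined by $\lim_{T(L)}\mathcal F=\bigwedge\{c: c\in\mathcal F^\#\cap C(L)\}$, is the finest topological convergence structure on $L$ that is coarser than $\lim_L$: it is topological, $\lim_L\mathcal F\le\lim_{T(L)}\mathcal F$ for all $\mathcal F$, and every topological convergence structure $\lim$ on $L$ with $\lim_L\le\lim$ pointwise satisfies $\lim_{T(L)}\le\lim$ pointwise.
   Context: A category of coframes has coframes as objects and coframe morphisms. A filter on $L$ is a non-empty upward-closed subset closed under binary meets ($L$ allowed); $\mathbb F L$ is the set of filters. A convergence structure on $L$ is a monotone map $\lim:\mathbb F L\to L$; a convergence $\mathbf C$-object is a $\mathbf C$-object with a convergence structure. For $\mathcal A\subseteq L$, $\mathcal A^\#=\{\ell: a\wedge\ell\ne\bot\ \forall a\in\mathcal A\}$. For a convergence structure $\lim$, an element $c$ is closed if it is complemented and $\lim\mathcal F\le c$ for every filter $\mathcal F$ with $c\in\mathcal F^\#$; $C(\lim)$ (written $C(L)$ for $\lim_L$) is the set of closed elements. A convergence structure $\lim$ is topological if $\lim\mathcal F=\bigwedge\{c:c\in\mathcal F^\#\cap C(\lim)\}$ for every filter $\mathcal F$. Convergence structures are ordered pointwise; $\lim\le\lim'$ means $\lim$ is finer (and $\lim'$ coarser). *)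

theory Defs
  imports Main
begin

class coframe = complete_lattice +
  assumes sup_Inf_coframe: "sup a (Inf S) = (INF s\<in>S. sup a s)"

text \<open>Filters on L: non-empty, upward closed, closed under binary meets (L itself allowed).\<close>
definition is_lfilter :: "'a::coframe set \<Rightarrow> bool" where
  "is_lfilter F \<longleftrightarrow> F \<noteq> {} \<and> (\<forall>a b. a \<in> F \<and> a \<le> b \<longrightarrow> b \<in> F)
     \<and> (\<forall>a\<in>F. \<forall>b\<in>F. inf a b \<in> F)"

text \<open>A convergence structure: a monotone map from filters (ordered by inclusion) to L.
  It is represented as a function on all subsets; only its values on filters matter.\<close>
definition convergence_structure :: "('a::coframe set \<Rightarrow> 'a) \<Rightarrow> bool" where
  "convergence_structure lim \<longleftrightarrow>
     (\<forall>F G. is_lfilter F \<and> is_lfilter G \<and> F \<subseteq> G \<longrightarrow> lim F \<le> lim G)"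

definition sharp :: "'a::coframe set \<Rightarrow> 'a set" where
  "sharp A = {l. \<forall>a\<in>A. inf a l \<noteq> bot}"

definition complemented :: "'a::coframe \<Rightarrow> bool" where
  "complemented c \<longleftrightarrow> (\<exists>d. inf c d = bot \<and> sup c d = top)"

definition closed_elems :: "('a::coframe set \<Rightarrow> 'a) \<Rightarrow> 'a set" where
  "closed_elems lim = {c. complemented c \<and>
      (\<forall>F. is_lfilter F \<and> c \<in> sharp F \<longrightarrow> lim F \<le> c)}"

definition topological :: "('a::coframe set \<Rightarrow> 'a) \<Rightarrow> bool" where
  "topological lim \<longleftrightarrow> convergence_structure lim \<and>
     (\<forall>F. is_lfilter F \<longrightarrow> lim F = Inf (sharp F \<inter> closed_elems lim))"

definition limT :: "('a::coframe set \<Rightarrow> 'a) \<Rightarrow> 'a set \<Rightarrow> 'a" where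
  "limT lim F = Inf {c. c \<in> sharp F \<inter> closed_elems lim}"

end

theory Submission
  imports Defs
begin

lemma closed_mono:
  assumes "\<forall>F. is_lfilter F \<longrightarrow> lim1 F \<le> lim2 F"
  shows "closed_elems lim2 \<subseteq> closed_elems lim1"
  using assms unfolding closed_elems_def by (auto intro: order_trans)

lemma limL_le:
  "is_lfilter F \<Longrightarrow> limL F \<le> limT limL F"
  unfolding limT_def closed_elems_def by (auto intro!: Inf_greatest)

lemma closed_eq: "closed_elems (limT limL) = closed_elems limL"
proof
  show "closed_elems (limT limL) \<subseteq> closed_elems limL"
    by (rule closed_mono) (auto intro: limL_le)
  show "closed_elems limL \<subseteq> closed_elems (limT limL)"
    unfolding closed_elems_def[of "limT limL"]
    by (auto simp: limT_def closed_elems_def intro!: Inf_lower)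
qed

lemma sharp_anti: "F \<subseteq> G \<Longrightarrow> sharp G \<subseteq> sharp F"
  unfolding sharp_def by auto

theorem mainTheorem18:
  fixes limL :: "'a::coframe set \<Rightarrow> 'a"
  assumes "convergence_structure limL"
  shows "topological (limT limL)
    \<and> (\<forall>F. is_lfilter F \<longrightarrow> limL F \<le> limT limL F)
    \<and> (\<forall>lim. topological lim \<and> (\<forall>F. is_lfilter F \<longrightarrow> limL F \<le> lim F)
              \<longrightarrow> (\<forall>F. is_lfilter F \<longrightarrow> limT limL F \<le> lim F))"
proof (intro conjI allI impI)
  have cs: "convergence_structure (limT limL)"
    unfolding convergence_structure_def limT_def
    by (auto intro!: Inf_superset_mono dest: sharp_anti)
  show "topological (limT limL)"
    unfolding topological_def using cs by (simp add: closed_eq limT_def Int_def)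
  show "\<And>F. is_lfilter F \<Longrightarrow> limL F \<le> limT limL F" by (rule limL_le)
  fix lim :: "'a set \<Rightarrow> 'a" and F :: "'a set"
  assume h: "topological lim \<and> (\<forall>F. is_lfilter F \<longrightarrow> limL F \<le> lim F)" and F: "is_lfilter F"
  have "closed_elems lim \<subseteq> closed_elems limL" using h by (intro closed_mono) auto
  hence "limT limL F \<le> Inf (sharp F \<inter> closed_elems lim)"
    unfolding limT_def by (intro Inf_superset_mono) auto
  also have "\<dots> = lim F" using h F unfolding topological_def by auto
  finally show "limT limL F \<le> lim F" .
qed

end
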